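(* Fix a positive integer $n$ and two partitions $\Lambda_w$ and $\Lambda_b$ of $n$. Then $$\sum_{T\in\mathbf{W}_{\Lambda_w,\Lambda_b}}\varepsilon(T)-\sum_{T\in\mathbf{B}_{\Lambda_w,\Lambda_b}}\varepsilon(T)=0.$$
   Context: A black and white tree is a finite tree embedded in $\mathbb{C}$ whose vertices are colored black and white so that adjacent vertices have different colors. It is real if it is invariant (including colors) under complex conjugation. Two real black and white trees are isomorphic if one is carried to the other by a homeomorphism of $\mathbb{C}$ commuting with complex conjugation, preserving the orientation of the real axis (and preserving the trees with their colors); trees are considered up to isomorphism. The real vertices of a real tree $T$ are its vertices on $\mathbb{R}$, ordered from left to right. A disorder of $T$ is a pair of real vertices of the same color such that the left one has strictly greater degree than the right one. The sign is $\varepsilon(T)=(-1)^d$, $d$ the number of disorders. $T$ is a white side (resp. black side) tree if its rightmost real vertex is white (resp. black). $\mathbf{W}_{\Lambda_w,\Lambda_b}$ (resp. $\mathbf{B}_{\Lambda_w,\Lambda_b}$) denotes the set of isomorphism classes of white side (resp. black side) real black and white trees whose white vertex degrees form the partition $\Lambda_w$ and black vertex degrees form $\Lambda_b$. *)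

theory Defs
  imports Main "HOL-Library.Multiset"
begin

text \<open>Combinatorial model of isomorphism classes of real black and white trees.
A real tree meets the real axis in a path of real vertices v_0 < ... < v_(k-1)
(consecutive ones joined by real edges, colours alternating). Everything else
lies in the open upper half plane and its mirror image. At each real vertex the
edges going into the upper half plane are linearly ordered (by angle from the
positive to the negative real direction), and each carries a planted plane tree.
Hence an isomorphism class is encoded by the colour of the leftmost real vertex
(True = white) and, for each real vertex from left to right, the ordered list
of plane rooted trees hanging into the upper half plane.\<close>

datatype ptree = Node "ptree list"

text \<open>Colour/degree pairs of the non-real vertices of a planted tree whose root
has colour x (the root also has its edge to the parent).\<close>
fun pdegs :: "bool \<Rightarrow> ptree \<Rightarrow> (bool \<times> nat) multiset" where
  "pdegs x (Node ts) = {#(x, Suc (length ts))#} + sum_list (map (pdegs (\<not> x)) ts)"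

type_synonym rtree = "bool \<times> ptree list list"

fun rt_valid :: "rtree \<Rightarrow> bool" where
  "rt_valid (c, vs) = (vs \<noteq> [])"

definition rcol :: "bool \<Rightarrow> nat \<Rightarrow> bool" where
  "rcol c i = (if even i then c else \<not> c)"

text \<open>degree of the i-th real vertex: real edges plus upper edges and their mirrors\<close>
definition rdeg :: "ptree list list \<Rightarrow> nat \<Rightarrow> nat" where
  "rdeg vs i = 2 * length (vs ! i) + (if 0 < i then 1 else 0)
               + (if Suc i < length vs then 1 else 0)"

text \<open>multiset of (colour, degree) over all vertices; non-real vertices come in
conjugate pairs, hence are counted twice\<close>
fun all_degs :: "rtree \<Rightarrow> (bool \<times> nat) multiset" where
  "all_degs (c, vs) =
     mset (map (\<lambda>i. (rcol c i, rdeg vs i)) [0..<length vs])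
     + sum_list (map (\<lambda>i. sum_list (map (\<lambda>t. pdegs (\<not> rcol c i) t + pdegs (\<not> rcol c i) t) (vs ! i)))
                     [0..<length vs])"

definition white_degs :: "rtree \<Rightarrow> nat multiset" where
  "white_degs T = image_mset snd (filter_mset fst (all_degs T))"

definition black_degs :: "rtree \<Rightarrow> nat multiset" where
  "black_degs T = image_mset snd (filter_mset (\<lambda>p. \<not> fst p) (all_degs T))"

fun disorders :: "rtree \<Rightarrow> nat" where
  "disorders (c, vs) = card {(i, j). i < j \<and> j < length vs \<and> rcol c i = rcol c j
                                    \<and> rdeg vs j < rdeg vs i}"

definition tsign :: "rtree \<Rightarrow> int" where
  "tsign T = (-1) ^ disorders T"

fun white_side :: "rtree \<Rightarrow> bool" where
  "white_side (c, vs) = rcol c (length vs - 1)"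

definition Wtrees :: "nat multiset \<Rightarrow> nat multiset \<Rightarrow> rtree set" where
  "Wtrees Lw Lb = {T. rt_valid T \<and> white_side T \<and> white_degs T = Lw \<and> black_degs T = Lb}"

definition Btrees :: "nat multiset \<Rightarrow> nat multiset \<Rightarrow> rtree set" where
  "Btrees Lw Lb = {T. rt_valid T \<and> \<not> white_side T \<and> white_degs T = Lw \<and> black_degs T = Lb}"

end

theory Submission
  imports Defs
begin
definition cnt :: "bool \<times> nat \<Rightarrow> (bool \<times> nat) list \<Rightarrow> nat" where
  "cnt x ys = length (filter (\<lambda>y. fst y = fst x \<and> snd y < snd x) ys)"

fun dl :: "(bool \<times> nat) list \<Rightarrow> nat" where
  "dl [] = 0" | "dl (x # xs) = cnt x xs + dl xs"

definition cr :: "(bool \<times> nat) list \<Rightarrow> (bool \<times> nat) list \<Rightarrow> nat" where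
  "cr xs ys = sum_list (map (\<lambda>x. cnt x ys) xs)"

lemma cnt_append[simp]: "cnt x (xs @ ys) = cnt x xs + cnt x ys"
  by (simp add: cnt_def)

lemma cnt_Nil[simp]: "cnt x [] = 0" by (simp add: cnt_def)

lemma cr_Cons[simp]: "cr (x # xs) ys = cnt x ys + cr xs ys" by (simp add: cr_def)
lemma cr_Nil[simp]: "cr [] ys = 0" by (simp add: cr_def)

lemma dl_append: "dl (xs @ ys) = dl xs + dl ys + cr xs ys"
  by (induction xs) auto

lemma cnt_mset: "mset ys = mset ys' \<Longrightarrow> cnt x ys = cnt x ys'"
proof -
  assume a: "mset ys = mset ys'"
  have "cnt x ys = size (mset (filter (\<lambda>y. fst y = fst x \<and> snd y < snd x) ys))"
    unfolding cnt_def by (simp only: size_mset)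
  also have "\<dots> = size (filter_mset (\<lambda>y. fst y = fst x \<and> snd y < snd x) (mset ys))"
    by (simp only: mset_filter)
  also have "\<dots> = size (mset (filter (\<lambda>y. fst y = fst x \<and> snd y < snd x) ys'))"
    by (simp only: mset_filter a)
  finally show ?thesis unfolding cnt_def by (simp only: size_mset)
qed

lemma sum_list_mset_eq:
  fixes g :: "'a \<Rightarrow> 'b::comm_monoid_add"
  shows "mset xs = mset xs' \<Longrightarrow> sum_list (map g xs) = sum_list (map g xs')"
proof -
  assume a: "mset xs = mset xs'"
  have "sum_list (map g xs) = sum_mset (mset (map g xs))" by (simp only: sum_mset_sum_list)
  also have "\<dots> = sum_mset (image_mset g (mset xs))" by (simp only: mset_map)
  also have "\<dots> = sum_mset (mset (map g xs'))" by (simp only: mset_map a)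
  finally show ?thesis by (simp only: sum_mset_sum_list)
qed

lemma cr_mset: "mset xs = mset xs' \<Longrightarrow> mset ys = mset ys' \<Longrightarrow> cr xs ys = cr xs' ys'"
proof -
  assume a: "mset xs = mset xs'" and b: "mset ys = mset ys'"
  have "cr xs ys = sum_list (map (\<lambda>x. cnt x ys') xs)"
    unfolding cr_def using cnt_mset[OF b] by simp
  also have "\<dots> = sum_list (map (\<lambda>x. cnt x ys') xs')"
    by (rule sum_list_mset_eq[OF a])
  finally show ?thesis unfolding cr_def .
qed

lemma dl_card: "card {(i, j). i < j \<and> j < length ds \<and> fst (ds ! i) = fst (ds ! j) \<and> snd (ds ! j) < snd (ds ! i)} = dl ds"
proof (induction ds)
  case Nil
  then show ?case by simp
next
  case (Cons x ds)
  let ?S = "{(i, j). i < j \<and> j < length ds \<and> fst (ds ! i) = fst (ds ! j) \<and> snd (ds ! j) < snd (ds ! i)}"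
  let ?A = "(\<lambda>j. (0::nat, Suc j)) ` {j. j < length ds \<and> fst (ds ! j) = fst x \<and> snd (ds ! j) < snd x}"
  let ?B = "(\<lambda>(i, j). (Suc i, Suc j)) ` ?S"
  have eq: "{(i, j). i < j \<and> j < length (x # ds) \<and> fst ((x # ds) ! i) = fst ((x # ds) ! j) \<and> snd ((x # ds) ! j) < snd ((x # ds) ! i)} = ?A \<union> ?B"
  proof (rule set_eqI, clarify)
    fix i j
    show "((i, j) \<in> {(i, j). i < j \<and> j < length (x # ds) \<and> fst ((x # ds) ! i) = fst ((x # ds) ! j) \<and> snd ((x # ds) ! j) < snd ((x # ds) ! i)}) = ((i, j) \<in> ?A \<union> ?B)"
    proof (cases i)
      case 0
      then show ?thesis
      proof (cases j)
        case (Suc j')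
        show ?thesis unfolding \<open>i = 0\<close> Suc by force
      qed auto
    next
      case (Suc i')
      then show ?thesis
      proof (cases j)
        case (Suc j')
        show ?thesis unfolding \<open>i = Suc i'\<close> Suc by force
      qed auto
    qed
  qed
  have fin: "finite ?S" by (rule finite_subset[of _ "{..<length ds} \<times> {..<length ds}"]) auto
  have d: "?A \<inter> ?B = {}" by auto
  have cA: "card ?A = cnt x ds"
  proof -
    have "card ?A = card {j. j < length ds \<and> fst (ds ! j) = fst x \<and> snd (ds ! j) < snd x}"
      by (rule card_image) (simp add: inj_on_def)
    also have "\<dots> = cnt x ds" unfolding cnt_def length_filter_conv_card by simp
    finally show ?thesis .
  qed
  have cB: "card ?B = card ?S" by (rule card_image) (auto simp: inj_on_def)
  have "card (?A \<union> ?B) = card ?A + card ?B"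
    by (rule card_Un_disjoint) (use fin in auto)
  then show ?case using eq cA cB Cons.IH by simp
qed

definition fd :: "bool \<Rightarrow> ptree list \<Rightarrow> (bool \<times> nat) multiset" where
  "fd x f = sum_list (map (pdegs x) f)"

definition ci :: "bool \<Rightarrow> ptree list \<Rightarrow> (bool \<times> nat) multiset" where
  "ci y f = {#(y, 2 * length f + 2)#} + fd (\<not> y) f + fd (\<not> y) f"

definition ce :: "bool \<Rightarrow> ptree list \<Rightarrow> (bool \<times> nat) multiset" where
  "ce y f = {#(y, 2 * length f + 1)#} + fd (\<not> y) f + fd (\<not> y) f"

fun csum :: "bool \<Rightarrow> ptree list list \<Rightarrow> (bool \<times> nat) multiset" where
  "csum y [] = {#}" | "csum y (f # fs) = ci y f + csum (\<not> y) fs"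

fun dseq :: "bool \<Rightarrow> ptree list list \<Rightarrow> (bool \<times> nat) list" where
  "dseq y [] = []" | "dseq y (f # fs) = (y, 2 * length f + 2) # dseq (\<not> y) fs"

definition rseq :: "bool \<Rightarrow> ptree list list \<Rightarrow> (bool \<times> nat) list" where
  "rseq c vs = map (\<lambda>i. (rcol c i, rdeg vs i)) [0..<length vs]"

lemma rcol_0[simp]: "rcol c 0 = c" by (simp add: rcol_def)
lemma rcol_Suc: "rcol c (Suc i) = rcol (\<not> c) i" by (simp add: rcol_def)

lemma disorders_dl: "disorders (c, vs) = dl (rseq c vs)"
proof -
  have "disorders (c, vs) = card {(i, j). i < j \<and> j < length (rseq c vs) \<and> fst (rseq c vs ! i) = fst (rseq c vs ! j) \<and> snd (rseq c vs ! j) < snd (rseq c vs ! i)}"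
    unfolding disorders.simps rseq_def
    by (rule arg_cong[where f = card]) auto
  then show ?thesis using dl_card by simp
qed

lemma dseq_map: "map (\<lambda>i. (rcol y i, 2 * length (M ! i) + 2)) [0..<length M] = dseq y M"
proof (induction M arbitrary: y)
  case Nil
  then show ?case by simp
next
  case (Cons f M)
  have "[0..<length (f # M)] = 0 # map Suc [0..<length M]"
    by (simp add: upt_conv_Cons map_Suc_upt del: upt_Suc)
  then show ?case using Cons.IH[of "\<not> y"] by (simp add: rcol_Suc comp_def)
qed

lemma csum_map: "sum_list (map (\<lambda>i. ci (rcol y i) (M ! i)) [0..<length M]) = csum y M"
proof (induction M arbitrary: y)
  case Nil
  then show ?case by simp
next
  case (Cons f M)
  have "[0..<length (f # M)] = 0 # map Suc [0..<length M]"
    by (simp add: upt_conv_Cons map_Suc_upt del: upt_Suc)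
  then show ?case using Cons.IH[of "\<not> y"] by (simp add: rcol_Suc comp_def)
qed

definition bc :: "bool \<Rightarrow> ptree list list \<Rightarrow> nat \<Rightarrow> (bool \<times> nat) multiset" where
  "bc c vs i = {#(rcol c i, rdeg vs i)#} + fd (\<not> rcol c i) (vs ! i) + fd (\<not> rcol c i) (vs ! i)"

lemma mset_sum_list_single: "mset xs = sum_list (map (\<lambda>x. {#x#}) xs)"
  by (induction xs) auto

lemma all_degs_bc: "all_degs (c, vs) = sum_list (map (bc c vs) [0..<length vs])"
proof -
  have gen: "\<And>idx. mset (map (\<lambda>i. (rcol c i, rdeg vs i)) idx) + sum_list (map (\<lambda>i. sum_list (map (\<lambda>t. pdegs (\<not> rcol c i) t + pdegs (\<not> rcol c i) t) (vs ! i))) idx)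
     = sum_list (map (bc c vs) idx)"
  proof -
    fix idx :: "nat list"
    show "mset (map (\<lambda>i. (rcol c i, rdeg vs i)) idx) + sum_list (map (\<lambda>i. sum_list (map (\<lambda>t. pdegs (\<not> rcol c i) t + pdegs (\<not> rcol c i) t) (vs ! i))) idx)
     = sum_list (map (bc c vs) idx)"
      by (induction idx) (simp_all add: bc_def fd_def sum_list_addf add.assoc add.left_commute)
  qed
  show ?thesis unfolding all_degs.simps by (rule gen)
qed

lemma idx_split: "[0..<length M + 2] = 0 # map Suc [0..<length M] @ [Suc (length M)]"
proof -
  have "[0..<length M + 2] = [0..<Suc (length M)] @ [Suc (length M)]" by simp
  also have "[0..<Suc (length M)] = 0 # map Suc [0..<length M]"
    by (simp add: upt_conv_Cons map_Suc_upt del: upt_Suc)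
  finally show ?thesis by simp
qed

lemma all_degs_split:
  "all_degs (c, f0 # M @ [fl]) = ce c f0 + csum (\<not> c) M + ce (rcol c (Suc (length M))) fl"
proof -
  let ?vs = "f0 # M @ [fl]"
  have l: "length ?vs = length M + 2" by simp
  have b0: "bc c ?vs 0 = ce c f0" unfolding bc_def ce_def rdeg_def by simp
  have bl: "bc c ?vs (Suc (length M)) = ce (rcol c (Suc (length M))) fl"
    unfolding bc_def ce_def rdeg_def by (simp add: nth_append)
  have bm: "map (bc c ?vs) (map Suc [0..<length M]) = map (\<lambda>i. ci (rcol (\<not> c) i) (M ! i)) [0..<length M]"
    unfolding map_map by (rule map_cong[OF refl]) (auto simp: bc_def ci_def rdeg_def nth_append rcol_Suc)
  have "all_degs (c, ?vs) = sum_list (map (bc c ?vs) (0 # map Suc [0..<length M] @ [Suc (length M)]))"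
    by (simp only: all_degs_bc l idx_split)
  also have "\<dots> = bc c ?vs 0 + sum_list (map (bc c ?vs) (map Suc [0..<length M])) + bc c ?vs (Suc (length M))"
    by (simp only: list.map map_append sum_list.Cons sum_list_append sum_list.Nil add.assoc add_0_right)
  also have "\<dots> = ce c f0 + csum (\<not> c) M + ce (rcol c (Suc (length M))) fl"
    by (simp only: b0 bl bm csum_map)
  finally show ?thesis .
qed

lemma rseq_split:
  "rseq c (f0 # M @ [fl]) = (c, 2 * length f0 + 1) # dseq (\<not> c) M @ [(rcol c (Suc (length M)), 2 * length fl + 1)]"
proof -
  let ?vs = "f0 # M @ [fl]"
  have l: "length ?vs = length M + 2" by simp
  have bm: "map (\<lambda>i. (rcol c i, rdeg ?vs i)) (map Suc [0..<length M]) = map (\<lambda>i. (rcol (\<not> c) i, 2 * length (M ! i) + 2)) [0..<length M]"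
    unfolding map_map by (rule map_cong[OF refl]) (auto simp: rdeg_def nth_append rcol_Suc)
  have "rseq c ?vs = map (\<lambda>i. (rcol c i, rdeg ?vs i)) (0 # map Suc [0..<length M] @ [Suc (length M)])"
    by (simp only: rseq_def l idx_split)
  also have "\<dots> = (rcol c 0, rdeg ?vs 0) # map (\<lambda>i. (rcol c i, rdeg ?vs i)) (map Suc [0..<length M]) @ [(rcol c (Suc (length M)), rdeg ?vs (Suc (length M)))]"
    by (simp only: list.map map_append append_Cons)
  also have "\<dots> = (c, 2 * length f0 + 1) # dseq (\<not> c) M @ [(rcol c (Suc (length M)), 2 * length fl + 1)]"
    by (simp only: bm dseq_map) (simp add: rdeg_def nth_append)
  finally show ?thesis .
qed

lemma all_degs_one: "all_degs (c, [f]) = {#(c, 2 * length f)#} + fd (\<not> c) f + fd (\<not> c) f"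
  unfolding all_degs_bc bc_def rdeg_def by simp

lemma rseq_one: "rseq c [f] = [(c, 2 * length f)]"
  unfolding rseq_def rdeg_def by simp

fun psize :: "ptree \<Rightarrow> nat" where
  "psize (Node ts) = Suc (sum_list (map psize ts))"

lemma size_sum_list_mset: "size (sum_list (ms :: 'a multiset list)) = sum_list (map size ms)"
  by (induction ms) auto

lemma size_pdegs: "size (pdegs x t) = psize t"
proof (induction t arbitrary: x)
  case (Node ts)
  have "map (\<lambda>t. size (pdegs (\<not> x) t)) ts = map psize ts"
    by (rule map_cong[OF refl]) (rule Node.IH)
  then have "sum_list (map (\<lambda>t. size (pdegs (\<not> x) t)) ts) = sum_list (map psize ts)" by (rule arg_cong[where f = sum_list])
  then show ?case by (simp add: size_sum_list_mset comp_def)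
qed

lemma psize_ne0: "psize t \<noteq> 0" by (cases t) auto
lemma psize_gt0: "0 < psize t" by (cases t) auto
lemma psize_pos: "1 \<le> psize t" by (cases t) auto

lemma elem_le_sum_list: "(x::nat) \<in> set xs \<Longrightarrow> x \<le> sum_list xs"
  by (induction xs) auto

lemma length_le_sum_psize: "length ts \<le> sum_list (map psize ts)"
proof (induction ts)
  case (Cons t ts) then show ?case using psize_pos[of t] by simp
qed simp

lemma finite_psize: "finite {t. psize t \<le> N}"
proof (induction N)
  case 0
  have e: "{t. psize t \<le> 0} = {}" by (simp add: psize_ne0)
  show ?case by (subst e) (rule finite.emptyI)
next
  case (Suc N)
  have "{t. psize t \<le> Suc N} \<subseteq> Node ` {ts. set ts \<subseteq> {t. psize t \<le> N} \<and> length ts \<le> N}"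
  proof
    fix t assume "t \<in> {t. psize t \<le> Suc N}"
    obtain ts where t: "t = Node ts" by (cases t)
    have le: "sum_list (map psize ts) \<le> N" using \<open>t \<in> {t. psize t \<le> Suc N}\<close> unfolding t by simp
    have "set ts \<subseteq> {t. psize t \<le> N}"
    proof
      fix s assume "s \<in> set ts"
      then have "psize s \<le> sum_list (map psize ts)" by (intro elem_le_sum_list) auto
      then show "s \<in> {t. psize t \<le> N}" using le by simp
    qed
    moreover have "length ts \<le> N" using length_le_sum_psize[of ts] le by simp
    ultimately have "ts \<in> {ts. set ts \<subseteq> {t. psize t \<le> N} \<and> length ts \<le> N}" by simp
    then show "t \<in> Node ` {ts. set ts \<subseteq> {t. psize t \<le> N} \<and> length ts \<le> N}" unfolding t by (rule imageI)
  qed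
  moreover have "finite (Node ` {ts. set ts \<subseteq> {t. psize t \<le> N} \<and> length ts \<le> N})"
    by (rule finite_imageI[OF finite_lists_length_le[OF Suc.IH]])
  ultimately show ?case by (rule finite_subset)
qed

lemma size_fd: "size (fd x f) = sum_list (map psize f)"
  unfolding fd_def by (simp add: size_sum_list_mset comp_def size_pdegs)

lemma size_all_degs: "size (all_degs (c, vs)) = sum_list (map (\<lambda>i. Suc (2 * sum_list (map psize (vs ! i)))) [0..<length vs])"
  unfolding all_degs_bc by (simp add: size_sum_list_mset comp_def bc_def size_fd mult_2)

lemma bounds:
  assumes "size (all_degs (c, vs)) \<le> N"
  shows "length vs \<le> N \<and> (\<forall>f \<in> set vs. length f \<le> N \<and> (\<forall>t \<in> set f. psize t \<le> N))"
proof -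
  let ?g = "\<lambda>i. Suc (2 * sum_list (map psize (vs ! i)))"
  have "length vs \<le> sum_list (map ?g [0..<length vs])"
    using sum_list_mono[of "[0..<length vs]" "\<lambda>_. (1::nat)" ?g] by (simp add: sum_list_triv)
  moreover have "\<forall>f \<in> set vs. sum_list (map psize f) \<le> sum_list (map ?g [0..<length vs])"
  proof
    fix f assume "f \<in> set vs"
    then obtain i where i: "i < length vs" "vs ! i = f" by (auto simp: in_set_conv_nth)
    have "?g i \<le> sum_list (map ?g [0..<length vs])" by (rule elem_le_sum_list) (use i in auto)
    then show "sum_list (map psize f) \<le> sum_list (map ?g [0..<length vs])" using i by simp
  qed
  ultimately have A: "length vs \<le> N" and B: "\<forall>f \<in> set vs. sum_list (map psize f) \<le> N"
    using assms unfolding size_all_degs[of c vs] by (auto intro: le_trans)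
  have "\<forall>f \<in> set vs. length f \<le> N \<and> (\<forall>t \<in> set f. psize t \<le> N)"
  proof
    fix f assume f: "f \<in> set vs"
    have Bf: "sum_list (map psize f) \<le> N" using B f by (rule bspec)
    have "length f \<le> N" using Bf length_le_sum_psize[of f] by (rule le_trans[rotated])
    moreover have "\<forall>t \<in> set f. psize t \<le> N"
    proof
      fix t assume "t \<in> set f"
      then have "psize t \<le> sum_list (map psize f)" by (intro elem_le_sum_list) auto
      then show "psize t \<le> N" using Bf by (rule le_trans)
    qed
    ultimately show "length f \<le> N \<and> (\<forall>t \<in> set f. psize t \<le> N)" by blast
  qed
  then show ?thesis using A by blast
qed

lemma img_filter1: "image_mset (Pair True) (image_mset snd (filter_mset fst M)) = filter_mset fst M"
  by (induction M) auto
lemma img_filter2: "image_mset (Pair False) (image_mset snd (filter_mset (\<lambda>p. \<not> fst p) M)) = filter_mset (\<lambda>p. \<not> fst p) M"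
  by (induction M) auto

lemma all_degs_from: "all_degs T = image_mset (Pair True) (white_degs T) + image_mset (Pair False) (black_degs T)"
proof -
  have a: "image_mset (Pair True) (white_degs T) = filter_mset fst (all_degs T)"
    unfolding white_degs_def by (rule img_filter1)
  have b: "image_mset (Pair False) (black_degs T) = filter_mset (\<lambda>p. \<not> fst p) (all_degs T)"
    unfolding black_degs_def by (rule img_filter2)
  show ?thesis unfolding a b by (simp add: multiset_partition[symmetric])
qed

lemma finite_S: "finite {T. rt_valid T \<and> white_degs T = Lw \<and> black_degs T = Lb}"
proof -
  let ?N = "size Lw + size Lb"
  let ?F = "{f. set f \<subseteq> {t. psize t \<le> ?N} \<and> length f \<le> ?N}"
  have fF: "finite ?F" by (rule finite_lists_length_le[OF finite_psize])
  have "{T. rt_valid T \<and> white_degs T = Lw \<and> black_degs T = Lb} \<subseteq> UNIV \<times> {vs. set vs \<subseteq> ?F \<and> length vs \<le> ?N}"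
  proof (rule subsetI)
    fix T assume T: "T \<in> {T. rt_valid T \<and> white_degs T = Lw \<and> black_degs T = Lb}"
    obtain c vs where cv: "T = (c, vs)" by (cases T)
    have "size (all_degs (c, vs)) = ?N" using all_degs_from[of "(c, vs)"] T cv by simp
    then have "size (all_degs (c, vs)) \<le> ?N" by simp
    from bounds[OF this] have "set vs \<subseteq> ?F \<and> length vs \<le> ?N" by auto
    then show "T \<in> UNIV \<times> {vs. set vs \<subseteq> ?F \<and> length vs \<le> ?N}" using cv by simp
  qed
  moreover have fb: "finite (UNIV :: bool set)" by (simp add: UNIV_bool)
  moreover have "finite ((UNIV :: bool set) \<times> {vs. set vs \<subseteq> ?F \<and> length vs \<le> ?N})"
    by (intro finite_cartesian_product[OF fb] finite_lists_length_le[OF fF])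
  ultimately show ?thesis using finite_subset by blast
qed

lemma dl_ends: "dl (x # D @ [y]) = cnt x D + cnt x [y] + dl D + cr D [y]"
  by (simp add: dl_append)

lemma cnt_Cons: "cnt x (y # D) = (if fst y = fst x \<and> snd y < snd x then 1 else 0) + cnt x D"
  by (simp add: cnt_def)

lemma cnt_cr_count:
  assumes "\<forall>y\<in>set D. fst y = fst x \<longrightarrow> snd y \<noteq> snd x"
  shows "cnt x D + cr D [x] = length (filter (\<lambda>y. fst y = fst x) D)"
  using assms
proof (induction D)
  case Nil
  then show ?case by simp
next
  case (Cons y D)
  then have IH: "cnt x D + cr D [x] = length (filter (\<lambda>y. fst y = fst x) D)" by simp
  have ne: "fst y = fst x \<longrightarrow> snd y \<noteq> snd x" using Cons.prems by simp
  show ?case using IH ne by (auto simp: cnt_Cons cnt_def)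
qed

lemma dseq_even: "\<forall>p\<in>set (dseq y M). even (snd p)"
  by (induction M arbitrary: y) auto

lemma dseq_length[simp]: "length (dseq y M) = length M"
  by (induction M arbitrary: y) auto

lemma dseq_count: "length (filter (\<lambda>p. fst p = z) (dseq y M)) = (if z = y then (length M + 1) div 2 else length M div 2)"
  by (induction M arbitrary: y) auto

lemma ne_odd: "\<forall>p\<in>set (dseq y M). fst p = fst x \<longrightarrow> snd p \<noteq> snd x" if "odd (snd x)"
  using dseq_even[of y M] that by fastforce

lemma sign_even: "even (a + b) \<Longrightarrow> (-1::int) ^ a = (-1) ^ b"
  by (cases "even a") (auto simp: minus_one_power_iff)

lemma sign_odd: "odd (a + b) \<Longrightarrow> (-1::int) ^ a = - ((-1) ^ b)"
  by (cases "even a") (auto simp: minus_one_power_iff)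

definition wt :: "bool \<times> ptree list list \<Rightarrow> int" where
  "wt T = tsign T * (if white_side T then 1 else -1)"

lemma tsign_rseq: "tsign (c, vs) = (-1) ^ dl (rseq c vs)"
  by (simp only: tsign_def disorders_dl)

lemma wside: "white_side (c, f0 # M @ [fl]) = rcol c (Suc (length M))"
  by simp

fun swp :: "'a list \<Rightarrow> 'a list" where
  "swp (a # b # R) = b # a # swp R" | "swp R = R"

lemma swp_swp[simp]: "swp (swp R) = R"
  by (induction R rule: swp.induct) auto

lemma swp_length[simp]: "length (swp R) = length R"
  by (induction R rule: swp.induct) auto

lemma csum_swp: "even (length M) \<Longrightarrow> csum y (swp M) = csum (\<not> y) M"
  by (induction M arbitrary: y rule: swp.induct) (auto simp: add_ac)

lemma dseq_swp_mset: "even (length M) \<Longrightarrow> mset (dseq y (swp M)) = mset (dseq (\<not> y) M)"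
  by (induction M arbitrary: y rule: swp.induct) auto

lemma dl_pair_diff: "fst p \<noteq> fst q \<Longrightarrow> dl (p # q # Z) = cnt p Z + cnt q Z + dl Z"
  by (simp add: cnt_Cons)

lemma dseq_swp_dl: "even (length M) \<Longrightarrow> dl (dseq y (swp M)) = dl (dseq (\<not> y) M)"
proof (induction M arbitrary: y rule: swp.induct)
  case (1 a b R)
  then have e: "even (length R)" by simp
  have "dl (dseq y (swp (a # b # R))) = cnt (y, 2 * length b + 2) (dseq y (swp R)) + cnt (\<not> y, 2 * length a + 2) (dseq y (swp R)) + dl (dseq y (swp R))"
    by (simp add: cnt_Cons)
  also have "\<dots> = cnt (y, 2 * length b + 2) (dseq (\<not> y) R) + cnt (\<not> y, 2 * length a + 2) (dseq (\<not> y) R) + dl (dseq (\<not> y) R)"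
    using "1.IH"[OF e, of y] cnt_mset[OF dseq_swp_mset[OF e, of y]] by simp
  also have "\<dots> = dl (dseq (\<not> y) (a # b # R))"
    by (simp add: cnt_Cons)
  finally show ?case .
qed auto

lemma phi_case:
  assumes "even (length M)"
  shows "all_degs (\<not> c, fl # swp M @ [f0]) = all_degs (c, f0 # M @ [fl])"
    and "wt (\<not> c, fl # swp M @ [f0]) = - wt (c, f0 # M @ [fl])"
proof -
  have r1: "rcol c (Suc (length M)) = (\<not> c)" using assms by (simp add: rcol_def)
  have r2: "rcol (\<not> c) (Suc (length M)) = c" using assms by (simp add: rcol_def)
  show "all_degs (\<not> c, fl # swp M @ [f0]) = all_degs (c, f0 # M @ [fl])"
    unfolding all_degs_split swp_length r1 r2 using csum_swp[OF assms, of c] by (simp add: add_ac)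
  let ?D = "dseq (\<not> c) M" and ?D' = "dseq c (swp M)"
  let ?E0 = "(c, 2 * length f0 + 1)" and ?E1 = "(\<not> c, 2 * length fl + 1)"
  have m: "mset ?D' = mset ?D" using dseq_swp_mset[OF assms, of c] by simp
  have d: "dl ?D' = dl ?D" using dseq_swp_dl[OF assms, of c] by simp
  have a1: "dl (rseq c (f0 # M @ [fl])) = cnt ?E0 ?D + dl ?D + cr ?D [?E1]"
    unfolding rseq_split r1 dl_ends by (simp add: cnt_Cons)
  have a2: "dl (rseq (\<not> c) (fl # swp M @ [f0])) = cnt ?E1 ?D + dl ?D + cr ?D [?E0]"
    unfolding rseq_split r2 dl_ends swp_length using d cnt_mset[OF m] cr_mset[OF m refl] by (simp add: cnt_Cons)
  have c0: "cnt ?E0 ?D + cr ?D [?E0] = length (filter (\<lambda>y. fst y = c) ?D)"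
    using cnt_cr_count[OF ne_odd] by simp
  have c1: "cnt ?E1 ?D + cr ?D [?E1] = length (filter (\<lambda>y. fst y = (\<not> c)) ?D)"
    using cnt_cr_count[OF ne_odd] by simp
  have "length (filter (\<lambda>y. fst y = c) ?D) + length (filter (\<lambda>y. fst y = (\<not> c)) ?D) = length M"
    using dseq_count[of c "\<not> c" M] dseq_count[of "\<not> c" "\<not> c" M] assms by auto
  then have "even (dl (rseq (\<not> c) (fl # swp M @ [f0])) + dl (rseq c (f0 # M @ [fl])))"
    using a1 a2 c0 c1 assms by presburger
  then have "tsign (\<not> c, fl # swp M @ [f0]) = tsign (c, f0 # M @ [fl])"
    unfolding tsign_rseq by (rule sign_even)
  then show "wt (\<not> c, fl # swp M @ [f0]) = - wt (c, f0 # M @ [fl])"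
    unfolding wt_def wside swp_length r1 r2 by simp
qed

lemma l1_case:
  assumes "odd (length M)" "length f0 \<noteq> length fl"
  shows "all_degs (c, fl # M @ [f0]) = all_degs (c, f0 # M @ [fl])"
    and "wt (c, fl # M @ [f0]) = - wt (c, f0 # M @ [fl])"
proof -
  have r1: "rcol c (Suc (length M)) = c" using assms by (simp add: rcol_def)
  show "all_degs (c, fl # M @ [f0]) = all_degs (c, f0 # M @ [fl])"
    unfolding all_degs_split r1 by (simp add: add_ac)
  let ?D = "dseq (\<not> c) M"
  let ?E0 = "(c, 2 * length f0 + 1)" and ?E1 = "(c, 2 * length fl + 1)"
  have a1: "dl (rseq c (f0 # M @ [fl])) = cnt ?E0 ?D + cnt ?E0 [?E1] + dl ?D + cr ?D [?E1]"
    unfolding rseq_split r1 dl_ends by simp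
  have a2: "dl (rseq c (fl # M @ [f0])) = cnt ?E1 ?D + cnt ?E1 [?E0] + dl ?D + cr ?D [?E0]"
    unfolding rseq_split r1 dl_ends by simp
  have c0: "cnt ?E0 ?D + cr ?D [?E0] = length (filter (\<lambda>y. fst y = c) ?D)"
    using cnt_cr_count[OF ne_odd] by simp
  have c1: "cnt ?E1 ?D + cr ?D [?E1] = length (filter (\<lambda>y. fst y = c) ?D)"
    using cnt_cr_count[OF ne_odd] by simp
  have c2: "cnt ?E0 [?E1] + cnt ?E1 [?E0] = 1"
    using assms(2) by (auto simp: cnt_Cons)
  have "odd (dl (rseq c (fl # M @ [f0])) + dl (rseq c (f0 # M @ [fl])))"
    using a1 a2 c0 c1 c2 by presburger
  then have "tsign (c, fl # M @ [f0]) = - tsign (c, f0 # M @ [fl])"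
    unfolding tsign_rseq by (rule sign_odd)
  then show "wt (c, fl # M @ [f0]) = - wt (c, f0 # M @ [fl])"
    unfolding wt_def wside by simp
qed

definition rs :: "'a list \<Rightarrow> 'a list \<Rightarrow> 'a list \<times> 'a list" where
  "rs a b = (take (length b) (a @ b), drop (length b) (a @ b))"

lemma rs_len1[simp]: "length (fst (rs a b)) = length b" by (simp add: rs_def)
lemma rs_len2[simp]: "length (snd (rs a b)) = length a" by (simp add: rs_def)
lemma rs_app: "fst (rs a b) @ snd (rs a b) = a @ b" by (simp only: rs_def fst_conv snd_conv append_take_drop_id)
lemma rs_rs[simp]: "rs (fst (rs a b)) (snd (rs a b)) = (a, b)"
proof -
  have "rs (fst (rs a b)) (snd (rs a b)) = (take (length a) (a @ b), drop (length a) (a @ b))"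
    unfolding rs_def[of "fst (rs a b)" "snd (rs a b)"] rs_app rs_len2 ..
  then show ?thesis by simp
qed

lemma fd_append: "fd x (a @ b) = fd x a + fd x b" by (simp add: fd_def)

lemma ci_rs: "ci y (fst (rs a b)) + ci y (snd (rs a b)) = ci y a + ci y b"
proof -
  have "fd (\<not> y) (fst (rs a b)) + fd (\<not> y) (snd (rs a b)) = fd (\<not> y) a + fd (\<not> y) b"
    using rs_app[of a b] by (metis fd_append)
  then show ?thesis unfolding ci_def by (simp add: add_ac)
qed

fun invb :: "ptree list list \<Rightarrow> ptree list list" where
  "invb (a # b # a' # b' # R) =
     (if length a \<noteq> length a' then fst (rs a a') # b # snd (rs a a') # b' # R
      else if length b \<noteq> length b' then a # fst (rs b b') # a' # snd (rs b b') # R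
      else a # b # a' # b' # invb R)"
| "invb R = R"

fun bfix :: "ptree list list \<Rightarrow> bool" where
  "bfix (a # b # a' # b' # R) = (length a = length a' \<and> length b = length b' \<and> bfix R)"
| "bfix R = True"

lemma invb_length[simp]: "length (invb R) = length R"
  by (induction R rule: invb.induct) auto

lemma invb_bfix[simp]: "bfix (invb R) = bfix R"
  by (induction R rule: invb.induct) auto

lemma invb_invb: "\<not> bfix R \<Longrightarrow> invb (invb R) = R"
  by (induction R rule: invb.induct) (auto simp: prod_eq_iff)

lemma invb_csum: "csum y (invb R) = csum y R"
proof (induction R arbitrary: y rule: invb.induct)
  case (1 a b a' b' R)
  show ?case
    using "1.IH" ci_rs[of y a a'] ci_rs[of "\<not> y" b b']
    by (auto simp: add_ac simp del: ci_def)
qed auto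

lemma invb_mset: "mset (dseq y (invb R)) = mset (dseq y R)"
  by (induction R arbitrary: y rule: invb.induct) auto

lemma dseq4: "dseq y (a # b # a' # b' # R) = [(y, 2 * length a + 2), (\<not> y, 2 * length b + 2), (y, 2 * length a' + 2), (\<not> y, 2 * length b' + 2)] @ dseq y R"
  by simp

lemma invb_dl: "\<not> bfix R \<Longrightarrow> odd (dl (dseq y (invb R)) + dl (dseq y R))"
proof (induction R arbitrary: y rule: invb.induct)
  case (1 a b a' b' R)
  let ?Z = "dseq y R"
  show ?case
  proof (cases "length a \<noteq> length a'")
    case True
    let ?p = "[(y, 2 * length a + 2), (\<not> y, 2 * length b + 2), (y, 2 * length a' + 2), (\<not> y, 2 * length b' + 2)]"
    let ?q = "[(y, 2 * length a' + 2), (\<not> y, 2 * length b + 2), (y, 2 * length a + 2), (\<not> y, 2 * length b' + 2)]"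
    have e: "invb (a # b # a' # b' # R) = fst (rs a a') # b # snd (rs a a') # b' # R" using True by simp
    have d1: "dseq y (invb (a # b # a' # b' # R)) = ?q @ ?Z" unfolding e dseq4 by simp
    have m: "mset ?q = mset ?p" by (simp add: add_mset_commute)
    have "odd (dl ?q + dl ?p)" using True by (auto simp: cnt_Cons)
    then show ?thesis unfolding d1 dseq4 dl_append cr_mset[OF m refl] by presburger
  next
    case False
    then have aa: "length a = length a'" by simp
    show ?thesis
    proof (cases "length b \<noteq> length b'")
      case True
      let ?p = "[(y, 2 * length a + 2), (\<not> y, 2 * length b + 2), (y, 2 * length a' + 2), (\<not> y, 2 * length b' + 2)]"
      let ?q = "[(y, 2 * length a + 2), (\<not> y, 2 * length b' + 2), (y, 2 * length a' + 2), (\<not> y, 2 * length b + 2)]"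
      have e: "invb (a # b # a' # b' # R) = a # fst (rs b b') # a' # snd (rs b b') # R" using True aa by simp
      have d1: "dseq y (invb (a # b # a' # b' # R)) = ?q @ ?Z" unfolding e dseq4 by simp
      have m: "mset ?q = mset ?p" by (simp add: add_mset_commute)
      have "odd (dl ?q + dl ?p)" using True aa by (auto simp: cnt_Cons)
      then show ?thesis unfolding d1 dseq4 dl_append cr_mset[OF m refl] by presburger
    next
      case False
      then have bb: "length b = length b'" by simp
      let ?p = "[(y, 2 * length a + 2), (\<not> y, 2 * length b + 2), (y, 2 * length a' + 2), (\<not> y, 2 * length b' + 2)]"
      have e: "invb (a # b # a' # b' # R) = a # b # a' # b' # invb R" using aa bb by simp
      have nb: "\<not> bfix R" using "1.prems" aa bb by simp
      have IH: "odd (dl (dseq y (invb R)) + dl (dseq y R))" using "1.IH" aa bb nb by simp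
      have d1: "dseq y (invb (a # b # a' # b' # R)) = ?p @ dseq y (invb R)" unfolding e dseq4 by simp
      show ?thesis unfolding d1 dseq4 dl_append cr_mset[OF refl invb_mset] using IH by presburger
    qed
  qed
qed auto

fun L2' :: "ptree list list \<Rightarrow> ptree list list" where
  "L2' (g # s # g' # R) = (if length g \<noteq> length g' then fst (rs g g') # s # snd (rs g g') # R
                           else g # s # g' # invb R)"
| "L2' M = M"

fun fix' :: "ptree list list \<Rightarrow> bool" where
  "fix' (g # s # g' # R) = (length g = length g' \<and> bfix R)"
| "fix' M = True"

definition L2 :: "ptree list list \<Rightarrow> ptree list list" where
  "L2 M = (if length M mod 4 = 1 then hd M # invb (tl M) else L2' M)"

definition fixM :: "ptree list list \<Rightarrow> bool" where
  "fixM M = (if length M mod 4 = 1 then bfix (tl M) else fix' M)"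

lemma L2'_length[simp]: "length (L2' M) = length M"
  by (induction M rule: L2'.induct) auto

lemma L2'_fix[simp]: "fix' (L2' M) = fix' M"
  by (induction M rule: L2'.induct) auto

lemma L2'_inv: "\<not> fix' M \<Longrightarrow> L2' (L2' M) = M"
  by (induction M rule: L2'.induct) (auto simp: invb_invb prod_eq_iff)

lemma L2'_csum: "csum y (L2' M) = csum y M"
proof (induction M rule: L2'.induct)
  case (1 g s g' R)
  show ?case using ci_rs[of y g g'] invb_csum[of "\<not> y" R]
    by (auto simp: add_ac simp del: ci_def)
qed auto

lemma L2'_mset: "mset (dseq y (L2' M)) = mset (dseq y M)"
proof (induction M rule: L2'.induct)
  case (1 g s g' R)
  show ?case using invb_mset[of "\<not> y" R] by (auto simp: add_mset_commute)
qed auto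

lemma dseq3: "dseq y (g # s # g' # R) = [(y, 2 * length g + 2), (\<not> y, 2 * length s + 2), (y, 2 * length g' + 2)] @ dseq (\<not> y) R"
  by simp

lemma L2'_dl: "\<not> fix' M \<Longrightarrow> odd (dl (dseq y (L2' M)) + dl (dseq y M))"
proof (induction M rule: L2'.induct)
  case (1 g s g' R)
  let ?Z = "dseq (\<not> y) R"
  show ?case
  proof (cases "length g \<noteq> length g'")
    case True
    let ?p = "[(y, 2 * length g + 2), (\<not> y, 2 * length s + 2), (y, 2 * length g' + 2)]"
    let ?q = "[(y, 2 * length g' + 2), (\<not> y, 2 * length s + 2), (y, 2 * length g + 2)]"
    have e: "L2' (g # s # g' # R) = fst (rs g g') # s # snd (rs g g') # R" using True by simp
    have d1: "dseq y (L2' (g # s # g' # R)) = ?q @ ?Z" unfolding e dseq3 by simp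
    have m: "mset ?q = mset ?p" by (simp add: add_mset_commute)
    have "odd (dl ?q + dl ?p)" using True by (auto simp: cnt_Cons)
    then show ?thesis unfolding d1 dseq3 dl_append cr_mset[OF m refl] by presburger
  next
    case False
    then have gg: "length g = length g'" by simp
    let ?p = "[(y, 2 * length g + 2), (\<not> y, 2 * length s + 2), (y, 2 * length g' + 2)]"
    have e: "L2' (g # s # g' # R) = g # s # g' # invb R" using gg by simp
    have nb: "\<not> bfix R" using "1.prems" gg by simp
    have IH: "odd (dl (dseq (\<not> y) (invb R)) + dl (dseq (\<not> y) R))" using invb_dl[OF nb] by simp
    have d1: "dseq y (L2' (g # s # g' # R)) = ?p @ dseq (\<not> y) (invb R)" unfolding e dseq3 by simp
    show ?thesis unfolding d1 dseq3 dl_append cr_mset[OF refl invb_mset] using IH by presburger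
  qed
qed auto

lemma L2_length[simp]: "length (L2 M) = length M"
proof (cases "length M mod 4 = 1")
  case True
  then have "M \<noteq> []" by auto
  then show ?thesis using True by (simp add: L2_def)
qed (simp add: L2_def)

lemma L2_fix[simp]: "fixM (L2 M) = fixM M"
proof (cases "length M mod 4 = 1")
  case True
  then have "M \<noteq> []" by auto
  then show ?thesis using True by (simp add: L2_def fixM_def)
qed (simp add: L2_def fixM_def)

lemma L2_inv: "\<not> fixM M \<Longrightarrow> L2 (L2 M) = M"
proof (cases "length M mod 4 = 1")
  case True
  assume nf: "\<not> fixM M"
  then have "M \<noteq> []" using True by auto
  moreover have "\<not> bfix (tl M)" using nf True by (simp add: fixM_def)
  ultimately show ?thesis using True by (simp add: L2_def invb_invb)
next
  case False
  assume nf: "\<not> fixM M"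
  then have "\<not> fix' M" using False by (simp add: fixM_def)
  then show ?thesis using False by (simp add: L2_def L2'_inv)
qed

lemma L2_csum: "csum y (L2 M) = csum y M"
proof (cases "length M mod 4 = 1")
  case True
  then obtain s R where "M = s # R" by (cases M) auto
  then show ?thesis using True by (simp add: L2_def invb_csum)
qed (simp add: L2_def L2'_csum)

lemma L2_mset: "mset (dseq y (L2 M)) = mset (dseq y M)"
proof (cases "length M mod 4 = 1")
  case True
  then obtain s R where "M = s # R" by (cases M) auto
  then show ?thesis using True invb_mset[of "\<not> y" R] by (simp add: L2_def)
qed (simp add: L2_def L2'_mset)

lemma L2_dl: "\<not> fixM M \<Longrightarrow> odd (dl (dseq y (L2 M)) + dl (dseq y M))"
proof (cases "length M mod 4 = 1")
  case True
  assume nf: "\<not> fixM M"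
  obtain s R where M: "M = s # R" using True by (cases M) auto
  have nb: "\<not> bfix R" using nf True M by (simp add: fixM_def)
  have e: "L2 (s # R) = s # invb R" using True M by (simp add: L2_def)
  have IH: "odd (dl (dseq (\<not> y) (invb R)) + dl (dseq (\<not> y) R))" using invb_dl[OF nb] by simp
  have cc: "cnt (y, 2 * length s + 2) (dseq (\<not> y) (invb R)) = cnt (y, 2 * length s + 2) (dseq (\<not> y) R)"
    by (rule cnt_mset[OF invb_mset])
  have "dl (dseq y (L2 M)) + dl (dseq y M) = (cnt (y, 2 * length s + 2) (dseq (\<not> y) (invb R)) + dl (dseq (\<not> y) (invb R)))
     + (cnt (y, 2 * length s + 2) (dseq (\<not> y) R) + dl (dseq (\<not> y) R))"
    unfolding M e by simp
  then show ?thesis using IH cc by presburger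
next
  case False
  assume nf: "\<not> fixM M"
  then have "\<not> fix' M" using False by (simp add: fixM_def)
  then show ?thesis using False L2'_dl by (simp add: L2_def)
qed

lemma l2_case:
  assumes "\<not> fixM M"
  shows "all_degs (c, f0 # L2 M @ [fl]) = all_degs (c, f0 # M @ [fl])"
    and "wt (c, f0 # L2 M @ [fl]) = - wt (c, f0 # M @ [fl])"
proof -
  show "all_degs (c, f0 # L2 M @ [fl]) = all_degs (c, f0 # M @ [fl])"
    unfolding all_degs_split L2_length L2_csum ..
  let ?D = "dseq (\<not> c) M" and ?D' = "dseq (\<not> c) (L2 M)"
  let ?E0 = "(c, 2 * length f0 + 1)" and ?E1 = "(rcol c (Suc (length M)), 2 * length fl + 1)"
  have m: "mset ?D' = mset ?D" by (rule L2_mset)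
  have a1: "dl (rseq c (f0 # M @ [fl])) = cnt ?E0 ?D + cnt ?E0 [?E1] + dl ?D + cr ?D [?E1]"
    unfolding rseq_split dl_ends by simp
  have a2: "dl (rseq c (f0 # L2 M @ [fl])) = cnt ?E0 ?D + cnt ?E0 [?E1] + dl ?D' + cr ?D [?E1]"
    unfolding rseq_split dl_ends L2_length using cnt_mset[OF m] cr_mset[OF m refl] by simp
  have "odd (dl ?D' + dl ?D)" using L2_dl[OF assms] by simp
  then have "odd (dl (rseq c (f0 # L2 M @ [fl])) + dl (rseq c (f0 # M @ [fl])))"
    using a1 a2 by presburger
  then have "tsign (c, f0 # L2 M @ [fl]) = - tsign (c, f0 # M @ [fl])"
    unfolding tsign_rseq by (rule sign_odd)
  then show "wt (c, f0 # L2 M @ [fl]) = - wt (c, f0 # M @ [fl])"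
    unfolding wt_def wside L2_length by simp
qed

fun blocksQ :: "'a list \<Rightarrow> ('a \<times> 'a) list" where
  "blocksQ (a # b # a' # b' # R) = (a, a') # (b, b') # blocksQ R" | "blocksQ R = []"

fun blocks :: "('a \<times> 'a) list \<Rightarrow> 'a list" where
  "blocks (p # q # Qs) = fst p # fst q # snd p # snd q # blocks Qs" | "blocks Qs = []"

definition lay :: "'a \<Rightarrow> ('a \<times> 'a) list \<Rightarrow> 'a list" where
  "lay s Qs = (if even (length Qs) then s # blocks Qs
               else fst (hd Qs) # s # snd (hd Qs) # blocks (tl Qs))"

fun gq' :: "'a list \<Rightarrow> 'a list \<times> ('a \<times> 'a) list" where
  "gq' (g # s # g' # R) = ([s], (g, g') # blocksQ R)" | "gq' M = ([], [])"

definition getsQ :: "ptree list list \<Rightarrow> ptree list \<times> (ptree list \<times> ptree list) list" where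
  "getsQ M = (if length M mod 4 = 1 then (hd M, blocksQ (tl M)) else (hd (fst (gq' M)), snd (gq' M)))"

fun chain :: "(ptree list \<times> ptree list) list \<Rightarrow> ptree list \<Rightarrow> ptree" where
  "chain [] P = Node P" | "chain (q # Qs) P = Node (chain Qs P # fst q @ snd q)"

definition halves :: "'a list \<Rightarrow> 'a list \<times> 'a list" where
  "halves l = (take (length l div 2) l, drop (length l div 2) l)"

fun unf :: "ptree \<Rightarrow> (ptree list \<times> ptree list) list \<times> (ptree list \<times> ptree list)" where
  "unf (Node []) = ([], ([], []))"
| "unf (Node (a # rest)) = (if even (length rest) then (halves rest # fst (unf a), snd (unf a))
                            else ([], halves (a # rest)))"

definition bal :: "('a list \<times> 'a list) list \<Rightarrow> bool" where
  "bal Qs = (\<forall>q \<in> set Qs. length (fst q) = length (snd q))"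

fun qsum :: "bool \<Rightarrow> (ptree list \<times> ptree list) list \<Rightarrow> (bool \<times> nat) multiset" where
  "qsum y [] = {#}" | "qsum y (q # Qs) = ci y (fst q) + ci y (snd q) + qsum (\<not> y) Qs"

lemma bal_Cons[simp]: "bal (q # Qs) = (length (fst q) = length (snd q) \<and> bal Qs)"
  by (simp add: bal_def)
lemma bal_Nil[simp]: "bal []" by (simp add: bal_def)

lemma blocks_blocksQ: "length R mod 4 = 0 \<Longrightarrow> blocks (blocksQ R) = R"
  by (induction R rule: blocksQ.induct) auto

lemma blocksQ_even: "even (length (blocksQ R))"
  by (induction R rule: blocksQ.induct) auto

lemma blocksQ_blocks: "even (length Qs) \<Longrightarrow> blocksQ (blocks Qs) = Qs"
  by (induction Qs rule: blocks.induct) auto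

lemma blocks_length: "even (length Qs) \<Longrightarrow> length (blocks Qs) = 2 * length Qs"
  by (induction Qs rule: blocks.induct) auto

lemma bfix_bal: "bfix R \<Longrightarrow> bal (blocksQ R)"
  by (induction R rule: blocksQ.induct) auto

lemma bal_bfix: "bal Qs \<Longrightarrow> bfix (blocks Qs)"
  by (induction Qs rule: blocks.induct) auto

lemma lay_length: "length (lay s Qs) = Suc (2 * length Qs)"
proof (cases "even (length Qs)")
  case True then show ?thesis by (simp add: lay_def blocks_length)
next
  case False
  then obtain q Q2 where Qs: "Qs = q # Q2" by (cases Qs) auto
  then have "even (length Q2)" using False by simp
  then show ?thesis using False Qs by (simp add: lay_def blocks_length)
qed

lemma getsQ_fix:
  assumes "odd (length M)" "fixM M"
  shows "lay (fst (getsQ M)) (snd (getsQ M)) = M \<and> bal (snd (getsQ M))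
         \<and> (even (length (snd (getsQ M))) = (length M mod 4 = 1))"
proof (cases "length M mod 4 = 1")
  case True
  then obtain s R where M: "M = s # R" by (cases M) auto
  have "Suc (length R) mod 4 = 1" using True M by simp
  then have R4: "length R mod 4 = 0" by presburger
  have bR: "bfix R" using assms(2) True M by (simp add: fixM_def)
  have g: "getsQ M = (s, blocksQ R)" using True M by (simp add: getsQ_def)
  show ?thesis unfolding g using blocksQ_even[of R] blocks_blocksQ[OF R4] bfix_bal[OF bR] True M
    by (simp add: lay_def)
next
  case False
  then have m3: "length M mod 4 = 3" using assms(1) by presburger
  then obtain g s g' R where M: "M = g # s # g' # R"
    by (cases M; cases "tl M"; cases "tl (tl M)") auto
  have "(3 + length R) mod 4 = 3" using m3 M by simp
  then have R4: "length R mod 4 = 0" by presburger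
  have fx: "length g = length g' \<and> bfix R" using assms(2) False M by (simp add: fixM_def)
  have gg: "getsQ M = (s, (g, g') # blocksQ R)" using False M by (simp add: getsQ_def)
  show ?thesis unfolding gg using blocksQ_even[of R] blocks_blocksQ[OF R4] bfix_bal fx False M
    by (simp add: lay_def)
qed

lemma lay_getsQ:
  assumes "bal Qs"
  shows "getsQ (lay s Qs) = (s, Qs) \<and> fixM (lay s Qs)"
proof (cases "even (length Qs)")
  case True
  have l: "length (lay s Qs) mod 4 = 1" using True lay_length[of s Qs] by (auto elim!: evenE)
  have e: "lay s Qs = s # blocks Qs" using True by (simp add: lay_def)
  show ?thesis using l unfolding getsQ_def fixM_def
    by (simp add: e blocksQ_blocks[OF True] bal_bfix[OF assms])
next
  case False
  then obtain q Q2 where Qs: "Qs = q # Q2" by (cases Qs) auto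
  then have ev: "even (length Q2)" using False by simp
  have l: "length (lay s (q # Q2)) mod 4 = 3" using False lay_length[of s Qs] Qs by (auto elim!: oddE)
  have e: "lay s (q # Q2) = fst q # s # snd q # blocks Q2" using False Qs by (simp add: lay_def)
  have bq: "length (fst q) = length (snd q)" "bal Q2" using assms Qs by auto
  show ?thesis using l unfolding Qs getsQ_def fixM_def
    by (simp add: e blocksQ_blocks[OF ev] bal_bfix[OF bq(2)] bq(1))
qed

lemma halves_app: "length h1 = length h2 \<Longrightarrow> halves (h1 @ h2) = (h1, h2)"
  by (simp add: halves_def)

lemma unf_chain:
  assumes "bal Qs" "length h1 = length h2"
  shows "unf (chain Qs (h1 @ h2)) = (Qs, (h1, h2))"
  using assms(1)
proof (induction Qs)
  case Nil
  show ?case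
  proof (cases "h1 @ h2")
    case Nil
    then show ?thesis by simp
  next
    case (Cons a rest)
    have "odd (length rest)"
    proof -
      have "length (h1 @ h2) = 2 * length h1" using assms(2) by simp
      then show ?thesis using Cons by simp presburger
    qed
    then show ?thesis using Cons halves_app[OF assms(2)] by simp
  qed
next
  case (Cons q Qs)
  have e: "even (length (fst q @ snd q))" using Cons.prems by simp
  show ?case using Cons e halves_app[of "fst q" "snd q"] by simp
qed

lemma unf_props:
  "bal (fst (unf t)) \<and> length (fst (snd (unf t))) = length (snd (snd (unf t)))
   \<and> chain (fst (unf t)) (fst (snd (unf t)) @ snd (snd (unf t))) = t"
proof (induction t rule: unf.induct)
  case 1
  then show ?case by simp
next
  case (2 a rest)
  show ?case
  proof (cases "even (length rest)")
    case True
    then show ?thesis using 2 True by (auto simp: halves_def elim!: evenE)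
  next
    case False
    then show ?thesis by (auto simp: halves_def elim!: oddE)
  qed
qed

lemma pdegs_Node: "pdegs y (Node ts) = {#(y, Suc (length ts))#} + fd (\<not> y) ts"
  by (simp add: fd_def)

lemma pdegs_chain:
  assumes "bal Qs" "length h1 = length h2"
  shows "pdegs y (chain Qs (h1 @ h2)) + pdegs y (chain Qs (h1 @ h2))
         = qsum y Qs + ce (if even (length Qs) then y else \<not> y) h1 + ce (if even (length Qs) then y else \<not> y) h2"
  using assms(1)
proof (induction Qs arbitrary: y)
  case Nil
  show ?case using assms(2) by (simp add: ce_def fd_def add_ac mult_2)
next
  case (Cons q Qs)
  have bq: "length (fst q) = length (snd q)" "bal Qs" using Cons.prems by auto
  have IH: "pdegs (\<not> y) (chain Qs (h1 @ h2)) + pdegs (\<not> y) (chain Qs (h1 @ h2))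
         = qsum (\<not> y) Qs + ce (if even (length Qs) then \<not> y else y) h1 + ce (if even (length Qs) then \<not> y else y) h2"
    using Cons.IH[OF bq(2), of "\<not> y"] by simp
  define X where "X = pdegs (\<not> y) (chain Qs (h1 @ h2))"
  define z where "z = (if even (length Qs) then \<not> y else y)"
  have IH': "X + X = qsum (\<not> y) Qs + ce z h1 + ce z h2" using IH unfolding X_def z_def by simp
  have e: "pdegs y (chain (q # Qs) (h1 @ h2)) = {#(y, 2 * length (fst q) + 2)#}
     + X + fd (\<not> y) (fst q) + fd (\<not> y) (snd q)"
    unfolding X_def using bq(1) by (simp add: fd_def add_ac)
  have "pdegs y (chain (q # Qs) (h1 @ h2)) + pdegs y (chain (q # Qs) (h1 @ h2))
      = ci y (fst q) + ci y (snd q) + (X + X)"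
    unfolding e ci_def using bq(1) by (simp add: add_ac)
  also have "\<dots> = qsum y (q # Qs) + ce z h1 + ce z h2" unfolding IH' by (simp add: add_ac)
  finally show ?case unfolding z_def by simp
qed

lemma csum_blocks: "even (length Qs) \<Longrightarrow> csum y (blocks Qs) = qsum y Qs"
  by (induction Qs arbitrary: y rule: blocks.induct) (auto simp: add_ac)

lemma csum_lay:
  "csum (\<not> c) (lay s Qs) = ci (if even (length Qs) then \<not> c else c) s + qsum (\<not> (if even (length Qs) then \<not> c else c)) Qs"
proof (cases "even (length Qs)")
  case True
  then show ?thesis by (simp add: lay_def csum_blocks)
next
  case False
  then obtain q Q2 where Qs: "Qs = q # Q2" by (cases Qs) auto
  then have ev: "even (length Q2)" using False by simp
  show ?thesis using False Qs by (simp add: lay_def csum_blocks[OF ev] add_ac)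
qed

lemma blocks_even_dl:
  assumes "bal Qs" "even (length Qs)"
  shows "even (dl (dseq y (blocks Qs))) \<and> (\<forall>x. even (cnt x (dseq y (blocks Qs))))"
  using assms
proof (induction Qs rule: blocks.induct)
  case (1 p q Qs)
  have bp: "length (fst p) = length (snd p)" "length (fst q) = length (snd q)" "bal Qs" "even (length Qs)"
    using "1.prems" by auto
  have IH: "even (dl (dseq y (blocks Qs))) \<and> (\<forall>x. even (cnt x (dseq y (blocks Qs))))"
    using "1.IH" bp(3,4) by simp
  let ?P = "(y, 2 * length (fst p) + 2)" and ?Q = "(\<not> y, 2 * length (fst q) + 2)"
  have d: "dseq y (blocks (p # q # Qs)) = [?P, ?Q, ?P, ?Q] @ dseq y (blocks Qs)"
    using bp by simp
  have dl4: "dl [?P, ?Q, ?P, ?Q] = 0" by (simp add: cnt_Cons)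
  have cnt4: "\<forall>x. even (cnt x [?P, ?Q, ?P, ?Q])" by (simp add: cnt_Cons)
  have cr4: "cr [?P, ?Q, ?P, ?Q] (dseq y (blocks Qs)) = 2 * (cnt ?P (dseq y (blocks Qs)) + cnt ?Q (dseq y (blocks Qs)))"
    by simp
  have "even (dl ([?P, ?Q, ?P, ?Q] @ dseq y (blocks Qs)))"
    unfolding dl_append cr4 dl4 using IH by simp
  moreover have "\<forall>x. even (cnt x ([?P, ?Q, ?P, ?Q] @ dseq y (blocks Qs)))"
  proof
    fix x
    have "even (cnt x [?P, ?Q, ?P, ?Q])" using cnt4 by blast
    moreover have "even (cnt x (dseq y (blocks Qs)))" using IH by blast
    ultimately show "even (cnt x ([?P, ?Q, ?P, ?Q] @ dseq y (blocks Qs)))" unfolding cnt_append by simp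
  qed
  ultimately show ?case unfolding d by blast
qed auto

lemma lay_even_dl:
  assumes "bal Qs"
  shows "even (dl (dseq y (lay s Qs)))"
proof (cases "even (length Qs)")
  case True
  have e: "dseq y (lay s Qs) = (y, 2 * length s + 2) # dseq (\<not> y) (blocks Qs)" using True by (simp add: lay_def)
  show ?thesis unfolding e using blocks_even_dl[OF assms True, of "\<not> y"] by simp
next
  case False
  then obtain q Q2 where Qs: "Qs = q # Q2" by (cases Qs) auto
  then have ev: "even (length Q2)" and bq: "length (fst q) = length (snd q)" "bal Q2"
    using False assms by auto
  let ?G = "(y, 2 * length (fst q) + 2)" and ?S = "(\<not> y, 2 * length s + 2)"
  have e: "dseq y (lay s Qs) = [?G, ?S, ?G] @ dseq (\<not> y) (blocks Q2)"
    using False Qs bq by (simp add: lay_def)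
  have dl3: "dl [?G, ?S, ?G] = 0" by (simp add: cnt_Cons)
  have IH: "even (dl (dseq (\<not> y) (blocks Q2))) \<and> (\<forall>x. even (cnt x (dseq (\<not> y) (blocks Q2))))"
    using blocks_even_dl[OF bq(2) ev] by simp
  show ?thesis unfolding e dl_append using dl3 IH by simp
qed

definition fold3 :: "bool \<Rightarrow> ptree list \<Rightarrow> ptree list list \<Rightarrow> ptree list \<Rightarrow> bool \<times> ptree list list" where
  "fold3 c f0 M fl = (if even (length (snd (getsQ M))) then \<not> c else c,
                      [chain (snd (getsQ M)) (f0 @ fl) # fst (getsQ M)])"

definition unfold1 :: "bool \<Rightarrow> ptree list \<Rightarrow> bool \<times> ptree list list" where
  "unfold1 c f = (case f of [] \<Rightarrow> (c, [[]])
     | t # s \<Rightarrow> (if even (length (fst (unf t))) then \<not> c else c,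
                 fst (snd (unf t)) # lay s (fst (unf t)) @ [snd (snd (unf t))]))"

lemma fd_Cons: "fd x (t # s) = pdegs x t + fd x s" by (simp add: fd_def)

lemma fold_case:
  assumes "odd (length M)" "length f0 = length fl" "fixM M"
  shows "all_degs (fold3 c f0 M fl) = all_degs (c, f0 # M @ [fl])"
    and "wt (fold3 c f0 M fl) = - wt (c, f0 # M @ [fl])"
    and "unfold1 (fst (fold3 c f0 M fl)) (hd (snd (fold3 c f0 M fl))) = (c, f0 # M @ [fl])"
proof -
  define s where "s = fst (getsQ M)"
  define Qs where "Qs = snd (getsQ M)"
  define c' where "c' = (if even (length Qs) then \<not> c else c)"
  have g: "lay s Qs = M" "bal Qs" "even (length Qs) = (length M mod 4 = 1)"
    using getsQ_fix[OF assms(1,3)] unfolding s_def Qs_def by auto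
  have f3: "fold3 c f0 M fl = (c', [chain Qs (f0 @ fl) # s])"
    unfolding fold3_def c'_def Qs_def s_def by simp
  have r1: "rcol c (Suc (length M)) = c" using assms(1) by (simp add: rcol_def)
  have uc: "unf (chain Qs (f0 @ fl)) = (Qs, (f0, fl))" by (rule unf_chain[OF g(2) assms(2)])
  show "unfold1 (fst (fold3 c f0 M fl)) (hd (snd (fold3 c f0 M fl))) = (c, f0 # M @ [fl])"
    unfolding f3 unfold1_def using uc g(1) by (simp add: c'_def)
  have z2: "(if even (length Qs) then \<not> c' else \<not> \<not> c') = c" by (simp add: c'_def)
  have "all_degs (fold3 c f0 M fl) = ci c' s + (pdegs (\<not> c') (chain Qs (f0 @ fl)) + pdegs (\<not> c') (chain Qs (f0 @ fl)))"
    unfolding f3 all_degs_one fd_Cons ci_def by (simp add: add_ac)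
  also have "\<dots> = ci c' s + qsum (\<not> c') Qs + ce c f0 + ce c fl"
    using pdegs_chain[OF g(2) assms(2), of "\<not> c'"] z2 by (simp add: add_ac)
  also have "\<dots> = all_degs (c, f0 # M @ [fl])"
    unfolding all_degs_split r1 using csum_lay[of c s Qs] g(1) by (simp add: c'_def add_ac)
  finally show "all_degs (fold3 c f0 M fl) = all_degs (c, f0 # M @ [fl])" .
  let ?D = "dseq (\<not> c) M" and ?E = "(c, 2 * length f0 + 1)"
  have a1: "dl (rseq c (f0 # M @ [fl])) = cnt ?E ?D + cr ?D [?E] + dl ?D"
    unfolding rseq_split r1 dl_ends using assms(2) by (simp add: cnt_Cons)
  have c0: "cnt ?E ?D + cr ?D [?E] = length M div 2"
    using cnt_cr_count[OF ne_odd, of ?E "\<not> c" M] dseq_count[of c "\<not> c" M] by simp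
  have ev: "even (dl ?D)" using lay_even_dl[OF g(2), of "\<not> c" s] g(1) by simp
  have lm: "length M div 2 = length Qs" using lay_length[of s Qs] g(1) by simp
  have par: "even (dl (rseq c (f0 # M @ [fl]))) = even (length Qs)"
    using a1 c0 ev lm by presburger
  have t1: "tsign (c, f0 # M @ [fl]) = (if even (length Qs) then 1 else -1)"
    unfolding tsign_rseq using par by (simp add: minus_one_power_iff)
  have t2: "tsign (fold3 c f0 M fl) = 1" unfolding f3 tsign_rseq rseq_one by simp
  show "wt (fold3 c f0 M fl) = - wt (c, f0 # M @ [fl])"
    unfolding wt_def t1 t2 wside r1 unfolding f3 by (simp add: c'_def rcol_def)
qed

lemma unfold_case:
  fixes t :: ptree
  defines "Qs \<equiv> fst (unf t)" and "h1 \<equiv> fst (snd (unf t))" and "h2 \<equiv> snd (snd (unf t))"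
  shows "unfold1 c' (t # s) = (if even (length Qs) then \<not> c' else c', h1 # lay s Qs @ [h2])"
    and "odd (length (lay s Qs))" "length h1 = length h2" "fixM (lay s Qs)"
    and "fold3 (if even (length Qs) then \<not> c' else c') h1 (lay s Qs) h2 = (c', [t # s])"
proof -
  have u: "bal Qs" "length h1 = length h2" "chain Qs (h1 @ h2) = t"
    using unf_props[of t] unfolding Qs_def h1_def h2_def by auto
  show "unfold1 c' (t # s) = (if even (length Qs) then \<not> c' else c', h1 # lay s Qs @ [h2])"
    unfolding unfold1_def Qs_def h1_def h2_def by simp
  show "odd (length (lay s Qs))" by (simp add: lay_length)
  show "length h1 = length h2" by (rule u(2))
  have gl: "getsQ (lay s Qs) = (s, Qs)" "fixM (lay s Qs)" using lay_getsQ[OF u(1)] by auto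
  show "fixM (lay s Qs)" by (rule gl(2))
  show "fold3 (if even (length Qs) then \<not> c' else c') h1 (lay s Qs) h2 = (c', [t # s])"
    unfolding fold3_def gl(1) using u(3) by simp
qed

definition iota :: "bool \<times> ptree list list \<Rightarrow> bool \<times> ptree list list" where
  "iota T = (if length (snd T) = 1 then unfold1 (fst T) (hd (snd T))
    else if length (snd T) < 2 then T
    else (let c = fst T; f0 = hd (snd T); M = butlast (tl (snd T)); fl = last (snd T) in
      if even (length M) then (\<not> c, fl # swp M @ [f0])
      else if length f0 \<noteq> length fl then (c, fl # M @ [f0])
      else if \<not> fixM M then (c, f0 # L2 M @ [fl])
      else fold3 c f0 M fl))"

lemma iota_long: "iota (c, f0 # M @ [fl]) =
      (if even (length M) then (\<not> c, fl # swp M @ [f0])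
      else if length f0 \<noteq> length fl then (c, fl # M @ [f0])
      else if \<not> fixM M then (c, f0 # L2 M @ [fl])
      else fold3 c f0 M fl)"
  by (simp add: iota_def Let_def)

lemma iota_one: "iota (c, [f]) = unfold1 c f"
  by (simp add: iota_def)

definition good :: "bool \<times> ptree list list \<Rightarrow> bool" where
  "good T = (snd T \<noteq> [] \<and> (length (snd T) = 1 \<longrightarrow> hd (snd T) \<noteq> []))"

lemma long_good: "good (c, f0 # M @ [fl])" by (simp add: good_def)

lemma vs_split: "2 \<le> length vs \<Longrightarrow> vs = hd vs # butlast (tl vs) @ [last vs]"
  by (cases vs) auto

lemma main_long:
  "iota (iota (c, f0 # M @ [fl])) = (c, f0 # M @ [fl]) \<and> good (iota (c, f0 # M @ [fl]))
   \<and> all_degs (iota (c, f0 # M @ [fl])) = all_degs (c, f0 # M @ [fl])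
   \<and> wt (iota (c, f0 # M @ [fl])) = - wt (c, f0 # M @ [fl])"
proof (cases "even (length M)")
  case True
  have e: "iota (c, f0 # M @ [fl]) = (\<not> c, fl # swp M @ [f0])" using True by (simp add: iota_long)
  show ?thesis unfolding e using phi_case[OF True, of c fl f0] True
    by (simp add: iota_long long_good)
next
  case False
  note od = False
  show ?thesis
  proof (cases "length f0 \<noteq> length fl")
    case True
    have e: "iota (c, f0 # M @ [fl]) = (c, fl # M @ [f0])" using True od by (simp add: iota_long)
    show ?thesis unfolding e using l1_case[OF od True, where c=c] True od
      by (simp add: iota_long long_good)
  next
    case False
    then have eq: "length f0 = length fl" by simp
    show ?thesis
    proof (cases "fixM M")
      case False
      have e: "iota (c, f0 # M @ [fl]) = (c, f0 # L2 M @ [fl])" using False od eq by (simp add: iota_long)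
      show ?thesis unfolding e using l2_case[OF False, of c f0 fl] False od eq
        by (simp add: iota_long long_good L2_inv)
    next
      case True
      have e: "iota (c, f0 # M @ [fl]) = fold3 c f0 M fl" using True od eq by (simp add: iota_long)
      obtain c' t s where f3: "fold3 c f0 M fl = (c', [t # s])" by (simp add: fold3_def)
      have bk: "iota (fold3 c f0 M fl) = (c, f0 # M @ [fl])"
        using fold_case(3)[OF od eq True, of c] unfolding f3 by (simp add: iota_one)
      have gd: "good (fold3 c f0 M fl)" unfolding f3 by (simp add: good_def)
      show ?thesis unfolding e using bk gd fold_case(1,2)[OF od eq True, of c] by simp
    qed
  qed
qed

lemma main:
  assumes "good T"
  shows "iota (iota T) = T \<and> good (iota T) \<and> all_degs (iota T) = all_degs T \<and> wt (iota T) = - wt T"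
proof -
  obtain c vs where T: "T = (c, vs)" by (cases T)
  show ?thesis
  proof (cases "length vs = 1")
    case True
    then obtain f where vs: "vs = [f]" by (cases vs) auto
    then obtain t s where f: "f = t # s" using assms T by (cases f) (auto simp: good_def)
    define Qs where "Qs = fst (unf t)"
    define h1 where "h1 = fst (snd (unf t))"
    define h2 where "h2 = snd (snd (unf t))"
    define c0 where "c0 = (if even (length Qs) then \<not> c else c)"
    have u: "iota T = (c0, h1 # lay s Qs @ [h2])"
      unfolding T vs f iota_one c0_def Qs_def h1_def h2_def by (rule unfold_case(1))
    have p: "odd (length (lay s Qs))" "length h1 = length h2" "fixM (lay s Qs)"
      "fold3 c0 h1 (lay s Qs) h2 = (c, [t # s])"
      using unfold_case(2)[where t=t and s=s] unfold_case(3)[where t=t] unfold_case(4)[where t=t and s=s] unfold_case(5)[where t=t and s=s and c'=c] unfolding Qs_def h1_def h2_def c0_def by auto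
    have ii: "iota (iota T) = T" unfolding u iota_long using p by (simp add: T vs f)
    have ml: "all_degs (iota (c0, h1 # lay s Qs @ [h2])) = all_degs (c0, h1 # lay s Qs @ [h2])"
       "wt (iota (c0, h1 # lay s Qs @ [h2])) = - wt (c0, h1 # lay s Qs @ [h2])"
      using main_long[of c0 h1 "lay s Qs" h2] by auto
    show ?thesis using ii ml unfolding u[symmetric] using long_good u by (simp add: ii)
  next
    case False
    then have "2 \<le> length vs" using assms T by (cases vs) (auto simp: good_def Suc_le_eq)
    then have vs: "vs = hd vs # butlast (tl vs) @ [last vs]" by (rule vs_split)
    show ?thesis unfolding T using main_long[of c "hd vs" "butlast (tl vs)" "last vs"] vs by metis
  qed
qed

theorem theorem3p9:
  fixes n :: nat and Lw Lb :: "nat multiset"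
  assumes "0 < n"
    and "\<forall>x\<in>#Lw. 0 < x" and "sum_mset Lw = n"
    and "\<forall>x\<in>#Lb. 0 < x" and "sum_mset Lb = n"
  shows "(\<Sum>T\<in>Wtrees Lw Lb. tsign T) - (\<Sum>T\<in>Btrees Lw Lb. tsign T) = 0"
proof -
  define S where "S = {T. rt_valid T \<and> white_degs T = Lw \<and> black_degs T = Lb}"
  have fin: "finite S" unfolding S_def by (rule finite_S)
  have goodS: "good T" if T: "T \<in> S" for T
  proof -
    obtain c vs where cv: "T = (c, vs)" by (cases T)
    have ne: "vs \<noteq> []" using T cv by (simp add: S_def)
    have "vs \<noteq> [[]]"
    proof
      assume v: "vs = [[]]"
      have z0: "sum_mset (white_degs T) = 0"
        unfolding cv v white_degs_def all_degs_one by (simp add: fd_def)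
      have eq: "white_degs T = Lw" using T by (simp add: S_def)
      have "sum_mset Lw = 0" using z0 eq by (simp only:)
      then show False using assms(1,3) by simp
    qed
    then show ?thesis using ne cv by (cases vs) (auto simp: good_def)
  qed
  have iotaS: "iota T \<in> S" if T: "T \<in> S" for T
  proof -
    have m: "good (iota T)" "all_degs (iota T) = all_degs T" using main[OF goodS[OF T]] by auto
    obtain c vs where cv: "iota T = (c, vs)" by (cases "iota T")
    have "rt_valid (iota T)" using m(1) cv by (simp add: good_def)
    moreover have "white_degs (iota T) = white_degs T" "black_degs (iota T) = black_degs T"
      unfolding white_degs_def black_degs_def m(2) by auto
    ultimately show ?thesis using T by (simp add: S_def)
  qed
  have "sum (\<lambda>T. - wt T) S = sum wt S"
  proof (rule sum.reindex_bij_witness[where i = iota and j = iota])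
    fix a assume a: "a \<in> S"
    show "iota (iota a) = a" using main[OF goodS[OF a]] by simp
    show "iota a \<in> S" by (rule iotaS[OF a])
    show "iota (iota a) = a" using main[OF goodS[OF a]] by simp
    show "iota a \<in> S" by (rule iotaS[OF a])
    show "wt (iota a) = - wt a" using main[OF goodS[OF a]] by simp
  qed
  then have z: "sum wt S = 0" by (simp add: sum_negf)
  have W: "Wtrees Lw Lb = {T \<in> S. white_side T}" unfolding Wtrees_def S_def by auto
  have B: "Btrees Lw Lb = {T \<in> S. \<not> white_side T}" unfolding Btrees_def S_def by auto
  have Su: "S = {T \<in> S. white_side T} \<union> {T \<in> S. \<not> white_side T}" by auto
  have "sum wt S = sum wt {T \<in> S. white_side T} + sum wt {T \<in> S. \<not> white_side T}"
    by (subst Su, rule sum.union_disjoint) (use fin in auto)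
  also have "sum wt {T \<in> S. white_side T} = (\<Sum>T\<in>Wtrees Lw Lb. tsign T)"
    unfolding W by (rule sum.cong) (auto simp: wt_def)
  also have "sum wt {T \<in> S. \<not> white_side T} = - (\<Sum>T\<in>Btrees Lw Lb. tsign T)"
    unfolding B sum_negf[symmetric] by (rule sum.cong) (auto simp: wt_def)
  finally show ?thesis using z by simp
qed

end
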